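(* Let $L$ be a commutative incline with the arithmetic geometric property. Then for every $k\ge 1$ and all $x_1,\dots,x_k\in L$, $$\bigoplus_{i=1}^{k} x_i^{\otimes 2}=\Big(\bigoplus_{i=1}^{k} x_i\Big)^{\otimes 2},$$ where $x^{\otimes 2}=x\otimes x$.
   Context: An incline is a nonempty set $L$ with two binary operations $\oplus,\otimes$ such that $(L,\oplus)$ is a semilattice ($\oplus$ associative, commutative, idempotent), $(L,\otimes)$ is a semigroup, $x\otimes(y\oplus z)=(x\otimes y)\oplus(x\otimes z)$ and $x\oplus(x\otimes y)=x$ for all $x,y,z\in L$. The relation $x\le y\iff x\oplus y=y$ is a partial order with $x\oplus y$ the least upper bound. $L$ is commutative if $\otimes$ is commutative. $L$ has the arithmetic geometric property (AG-property) if $x\otimes y\le (x\otimes x)\oplus(y\otimes y)$ for all $x,y\in L$. *)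

theory Defs
  imports Main
begin

text \<open>An incline on carrier L with operations p (the semilattice join, written oplus)
  and m (the multiplication, written otimes).\<close>
definition incline :: "'a set \<Rightarrow> ('a \<Rightarrow> 'a \<Rightarrow> 'a) \<Rightarrow> ('a \<Rightarrow> 'a \<Rightarrow> 'a) \<Rightarrow> bool" where
  "incline L p m \<longleftrightarrow>
     L \<noteq> {} \<and>
     (\<forall>x\<in>L. \<forall>y\<in>L. p x y \<in> L \<and> m x y \<in> L) \<and>
     (\<forall>x\<in>L. \<forall>y\<in>L. \<forall>z\<in>L. p (p x y) z = p x (p y z)) \<and>
     (\<forall>x\<in>L. \<forall>y\<in>L. p x y = p y x) \<and>
     (\<forall>x\<in>L. p x x = x) \<and>
     (\<forall>x\<in>L. \<forall>y\<in>L. \<forall>z\<in>L. m (m x y) z = m x (m y z)) \<and>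
     (\<forall>x\<in>L. \<forall>y\<in>L. \<forall>z\<in>L. m x (p y z) = p (m x y) (m x z)) \<and>
     (\<forall>x\<in>L. \<forall>y\<in>L. p x (m x y) = x)"

definition commutative_incline :: "'a set \<Rightarrow> ('a \<Rightarrow> 'a \<Rightarrow> 'a) \<Rightarrow> ('a \<Rightarrow> 'a \<Rightarrow> 'a) \<Rightarrow> bool" where
  "commutative_incline L p m \<longleftrightarrow> incline L p m \<and> (\<forall>x\<in>L. \<forall>y\<in>L. m x y = m y x)"

definition incline_le :: "('a \<Rightarrow> 'a \<Rightarrow> 'a) \<Rightarrow> 'a \<Rightarrow> 'a \<Rightarrow> bool" where
  "incline_le p x y \<longleftrightarrow> p x y = y"

definition AG_property :: "'a set \<Rightarrow> ('a \<Rightarrow> 'a \<Rightarrow> 'a) \<Rightarrow> ('a \<Rightarrow> 'a \<Rightarrow> 'a) \<Rightarrow> bool" where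
  "AG_property L p m \<longleftrightarrow> (\<forall>x\<in>L. \<forall>y\<in>L. incline_le p (m x y) (p (m x x) (m y y)))"

fun bigjoin :: "('a \<Rightarrow> 'a \<Rightarrow> 'a) \<Rightarrow> (nat \<Rightarrow> 'a) \<Rightarrow> nat \<Rightarrow> 'a" where
  "bigjoin p x 0 = undefined"
| "bigjoin p x (Suc 0) = x 1"
| "bigjoin p x (Suc (Suc k)) = p (bigjoin p x (Suc k)) (x (Suc (Suc k)))"

end

theory Submission
  imports Defs
begin

lemma sq_join:
  assumes ci: "commutative_incline L p m" and ag: "AG_property L p m"
    and a: "a \<in> L" and b: "b \<in> L"
  shows "m (p a b) (p a b) = p (m a a) (m b b)"
proof -
  have I: "incline L p m" and mc: "\<forall>x\<in>L. \<forall>y\<in>L. m x y = m y x" using ci by (auto simp: commutative_incline_def)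
  have cl: "\<And>x y. x\<in>L \<Longrightarrow> y\<in>L \<Longrightarrow> p x y \<in> L \<and> m x y \<in> L" using I by (auto simp: incline_def)
  have pa: "\<And>x y z. x\<in>L \<Longrightarrow> y\<in>L \<Longrightarrow> z\<in>L \<Longrightarrow> p (p x y) z = p x (p y z)" using I by (auto simp: incline_def)
  have pc: "\<And>x y. x\<in>L \<Longrightarrow> y\<in>L \<Longrightarrow> p x y = p y x" using I by (auto simp: incline_def)
  have pi: "\<And>x. x\<in>L \<Longrightarrow> p x x = x" using I by (auto simp: incline_def)
  have dl: "\<And>x y z. x\<in>L \<Longrightarrow> y\<in>L \<Longrightarrow> z\<in>L \<Longrightarrow> m x (p y z) = p (m x y) (m x z)" using I by (auto simp: incline_def)
  have mcomm: "m b a = m a b" using mc a b by auto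
  have agab: "p (m a b) (p (m a a) (m b b)) = p (m a a) (m b b)"
    using ag a b by (auto simp: AG_property_def incline_le_def)
  define A where "A = m a a" define B where "B = m b b" define C where "C = m a b"
  have AL: "A \<in> L" and BL: "B \<in> L" and CL: "C \<in> L" using cl a b by (auto simp: A_def B_def C_def)
  have pabL: "p a b \<in> L" using cl a b by auto
  have "m (p a b) (p a b) = p (m (p a b) a) (m (p a b) b)" using dl pabL a b by auto
  also have "m (p a b) a = m a (p a b)" using mc pabL a by auto
  also have "m (p a b) b = m b (p a b)" using mc pabL b by auto
  also have "m a (p a b) = p A C" using dl a b by (auto simp: A_def C_def)
  also have "m b (p a b) = p C B" using dl a b mcomm by (auto simp: B_def C_def)
  also have "p (p A C) (p C B) = p A (p C (p C B))" using pa AL BL CL cl by auto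
  also have "p C (p C B) = p C B" using pa[of C C B] pi CL BL by auto
  also have "p A (p C B) = p C (p A B)" using pa AL BL CL pc by metis
  also have "\<dots> = p A B" using agab by (simp add: A_def B_def C_def)
  finally show ?thesis by (simp add: A_def B_def)
qed

lemma bigjoin_L:
  assumes I: "incline L p m" and "\<forall>i\<in>{1..Suc k}. x i \<in> L"
  shows "bigjoin p x (Suc k) \<in> L"
  using assms(2)
proof (induction k)
  case 0 then show ?case by simp
next
  case (Suc k)
  then show ?case using I by (simp add: incline_def)
qed

theorem mainTheorem2:
  fixes L :: "'a set" and p m :: "'a \<Rightarrow> 'a \<Rightarrow> 'a"
    and k :: nat and x :: "nat \<Rightarrow> 'a"
  assumes "commutative_incline L p m"
    and "AG_property L p m"
    and "k \<ge> 1"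
    and "\<forall>i\<in>{1..k}. x i \<in> L"
  shows "bigjoin p (\<lambda>i. m (x i) (x i)) k = m (bigjoin p x k) (bigjoin p x k)"
proof -
  obtain n where k: "k = Suc n" using assms(3) by (cases k) auto
  have I: "incline L p m" using assms(1) by (simp add: commutative_incline_def)
  have "\<forall>i\<in>{1..Suc n}. x i \<in> L \<Longrightarrow> bigjoin p (\<lambda>i. m (x i) (x i)) (Suc n) = m (bigjoin p x (Suc n)) (bigjoin p x (Suc n))"
  proof (induction n)
    case 0 then show ?case by simp
  next
    case (Suc n)
    have h: "\<forall>i\<in>{1..Suc n}. x i \<in> L" using Suc.prems by auto
    have "bigjoin p x (Suc n) \<in> L" using bigjoin_L[OF I h] .
    moreover have "x (Suc (Suc n)) \<in> L" using Suc.prems by auto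
    ultimately show ?case using Suc.IH[OF h] sq_join[OF assms(1,2)] by simp
  qed
  then show ?thesis using assms(4) k by simp
qed

end
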